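(* Let $(\Sigma,\theta)$ be a Noetherian space. The map $S$ sending a topology $\tau$ on $\Sigma^*$ to the topology generated by the sets $\uparrow_{\le^*}(UV)$ for $U,V\in\tau$ and $\uparrow_{\le^*}W$ for $W\in\theta$ is a topology expander over $\Sigma^*$.
   Context: $\Sigma^*$: finite words; $UV$: concatenation; letters identified with one-letter words; $\le$ the specialisation preorder of $\theta$; $\le^*$ Higman's ordering ($u\le^*w$ iff a strictly increasing map $h$ of positions satisfies $u_i\le w_{h(i)}$); $\uparrow_{\le^*}$ upward closure. Noetherian: every subset compact. A refinement function over $X$ is a map $R$ from topologies on $X$ to topologies on $X$, monotone for inclusion and preserving Noetherianity. For a topology $\tau$ and $H\subseteq X$, $\tau|_H$ is the topology on $X$ generated by $\{U\cap H:U\in\tau\}$. A topology expander is a refinement function $R$ such that for every Noetherian $\tau$ with $\tau\subseteq R(\tau)$ and every $H$ closed in $\tau$, $R(\tau)|_H=R(\tau|_H)|_H$. *)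

theory Defs
  imports "HOL-Analysis.Analysis" "HOL-Library.Sublist"
begin

text \<open>Topologies on a whole type X are values of type 'a topology with topspace = UNIV.\<close>

definition noetherian_top :: "'a topology \<Rightarrow> bool" where
  "noetherian_top \<tau> \<longleftrightarrow> (\<forall>K. K \<subseteq> topspace \<tau> \<longrightarrow> compactin \<tau> K)"

definition top_le :: "'a topology \<Rightarrow> 'a topology \<Rightarrow> bool" where
  "top_le \<tau> \<sigma> \<longleftrightarrow> (\<forall>U. openin \<tau> U \<longrightarrow> openin \<sigma> U)"

definition gen_top :: "'a set set \<Rightarrow> 'a topology" where
  "gen_top B = topology (generate_topology B)"

definition top_restrict :: "'a topology \<Rightarrow> 'a set \<Rightarrow> 'a topology" where
  "top_restrict \<tau> H = gen_top {U \<inter> H | U. openin \<tau> U}"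

definition refinement_function :: "('a topology \<Rightarrow> 'a topology) \<Rightarrow> bool" where
  "refinement_function R \<longleftrightarrow>
     (\<forall>\<tau>. topspace \<tau> = UNIV \<longrightarrow> topspace (R \<tau>) = UNIV)
   \<and> (\<forall>\<tau> \<sigma>. topspace \<tau> = UNIV \<longrightarrow> topspace \<sigma> = UNIV \<longrightarrow> top_le \<tau> \<sigma> \<longrightarrow> top_le (R \<tau>) (R \<sigma>))
   \<and> (\<forall>\<tau>. topspace \<tau> = UNIV \<longrightarrow> noetherian_top \<tau> \<longrightarrow> noetherian_top (R \<tau>))"

definition topology_expander :: "('a topology \<Rightarrow> 'a topology) \<Rightarrow> bool" where
  "topology_expander R \<longleftrightarrow> refinement_function R \<and>
     (\<forall>\<tau> H. topspace \<tau> = UNIV \<longrightarrow> noetherian_top \<tau> \<longrightarrow> top_le \<tau> (R \<tau>) \<longrightarrow> closedin \<tau> H \<longrightarrow>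
        top_restrict (R \<tau>) H = top_restrict (R (top_restrict \<tau> H)) H)"

definition spec_le :: "'a topology \<Rightarrow> 'a \<Rightarrow> 'a \<Rightarrow> bool" where
  "spec_le \<theta> x y \<longleftrightarrow> (\<forall>U. openin \<theta> U \<longrightarrow> x \<in> U \<longrightarrow> y \<in> U)"

definition higman_le :: "'a topology \<Rightarrow> 'a list \<Rightarrow> 'a list \<Rightarrow> bool" where
  "higman_le \<theta> = list_emb (spec_le \<theta>)"

definition up_higman :: "'a topology \<Rightarrow> 'a list set \<Rightarrow> 'a list set" where
  "up_higman \<theta> A = {w. \<exists>u\<in>A. higman_le \<theta> u w}"

definition word_concat :: "'a list set \<Rightarrow> 'a list set \<Rightarrow> 'a list set" where
  "word_concat U V = {u @ v | u v. u \<in> U \<and> v \<in> V}"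

text \<open>The map S of the theorem; a set W of letters is identified with the set of one-letter words.\<close>
definition S_map :: "'a topology \<Rightarrow> 'a list topology \<Rightarrow> 'a list topology" where
  "S_map \<theta> \<tau> = gen_top
     ({up_higman \<theta> (word_concat U V) | U V. openin \<tau> U \<and> openin \<tau> V}
      \<union> {up_higman \<theta> ((\<lambda>a. [a]) ` W) | W. openin \<theta> W})"

end

theory Submission
  imports Defs "HOL-Library.Ramsey"
begin

definition acc_fam :: "'b set set \<Rightarrow> bool" where
  "acc_fam G \<longleftrightarrow> (\<forall>F \<subseteq> G. \<exists>F0 \<subseteq> F. finite F0 \<and> \<Union>F0 = \<Union>F)"

lemma istop_gen: "istopology (generate_topology B)"
  unfolding istopology_def by (auto intro: generate_topology.intros)

lemma openin_gen_top: "openin (gen_top B) = generate_topology B"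
  unfolding gen_top_def using istop_gen topology_inverse' by blast

lemma topspace_gen_top[simp]: "topspace (gen_top B) = UNIV"
  unfolding topspace_def openin_gen_top by (auto intro: generate_topology.UNIV)

lemma gen_mono: "generate_topology B Y \<Longrightarrow> B \<subseteq> B' \<Longrightarrow> generate_topology B' Y"
  by (induction rule: generate_topology.induct) (auto intro: generate_topology.intros)

lemma noeth_acc:
  assumes "topspace \<tau> = UNIV" "noetherian_top \<tau>"
  shows "acc_fam {U. openin \<tau> U}"
  unfolding acc_fam_def
proof (intro allI impI)
  fix F assume F: "F \<subseteq> {U. openin \<tau> U}"
  have "compactin \<tau> (\<Union>F)" using assms unfolding noetherian_top_def by auto
  then obtain F0 where "finite F0" "F0 \<subseteq> F" "\<Union>F \<subseteq> \<Union>F0"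
    unfolding compactin_def using F by (metis mem_Collect_eq subset_eq order_refl)
  then show "\<exists>F0\<subseteq>F. finite F0 \<and> \<Union> F0 = \<Union> F" by blast
qed

lemma acc_Un: "acc_fam A \<Longrightarrow> acc_fam B \<Longrightarrow> acc_fam (A \<union> B)"
  unfolding acc_fam_def
proof (intro allI impI)
  fix F assume a: "\<forall>F\<subseteq>A. \<exists>F0\<subseteq>F. finite F0 \<and> \<Union> F0 = \<Union> F"
    and b: "\<forall>F\<subseteq>B. \<exists>F0\<subseteq>F. finite F0 \<and> \<Union> F0 = \<Union> F" and F: "F \<subseteq> A \<union> B"
  obtain F1 where F1: "F1 \<subseteq> F \<inter> A" "finite F1" "\<Union>F1 = \<Union>(F \<inter> A)" using a by (meson inf_le2)
  obtain F2 where F2: "F2 \<subseteq> F \<inter> B" "finite F2" "\<Union>F2 = \<Union>(F \<inter> B)" using b by (meson inf_le2)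
  have "\<Union>(F1 \<union> F2) = \<Union>F" using F F1 F2 by auto
  then show "\<exists>F0\<subseteq>F. finite F0 \<and> \<Union> F0 = \<Union> F" using F1 F2 by (intro exI[of _ "F1 \<union> F2"]) auto
qed

lemma acc_insert: "acc_fam A \<Longrightarrow> acc_fam (insert X A)"
proof -
  assume "acc_fam A"
  moreover have "acc_fam {X}" unfolding acc_fam_def
    by (metis finite.emptyI finite_insert order_refl subset_singletonD)
  ultimately show ?thesis using acc_Un[of "{X}" A] by simp
qed

lemma acc_image:
  assumes "\<forall>F \<subseteq> S. \<exists>F0 \<subseteq> F. finite F0 \<and> \<Union>(r ` F0) = \<Union>(r ` F)"
    and "\<And>X. k (\<Union>X) = \<Union>(k ` X)"
  shows "acc_fam ((\<lambda>x. k (r x)) ` S)"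
  unfolding acc_fam_def
proof (intro allI impI)
  fix F assume "F \<subseteq> (\<lambda>x. k (r x)) ` S"
  then obtain G where G: "G \<subseteq> S" "F = (\<lambda>x. k (r x)) ` G" by (auto simp: subset_image_iff)
  then obtain G0 where G0: "G0 \<subseteq> G" "finite G0" "\<Union>(r ` G0) = \<Union>(r ` G)" using assms(1) by meson
  have "\<Union>((\<lambda>x. k (r x)) ` G0) = k (\<Union>(r ` G0))" using assms(2)[of "r ` G0"] by (simp add: image_image)
  also have "\<dots> = \<Union>((\<lambda>x. k (r x)) ` G)" using G0(3) assms(2)[of "r ` G"] by (simp add: image_image)
  finally show "\<exists>F0\<subseteq>F. finite F0 \<and> \<Union> F0 = \<Union> F" using G G0 by (intro exI[of _ "(\<lambda>x. k (r x)) ` G0"]) auto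
qed


lemma rect_acc:
  assumes N: "acc_fam {U. openin \<tau> U}"
    and PS: "P \<subseteq> {p. openin \<tau> (fst p) \<and> openin \<tau> (snd p)}"
  shows "\<exists>P0 \<subseteq> P. finite P0 \<and> \<Union>((\<lambda>p. fst p \<times> snd p) ` P0) = \<Union>((\<lambda>p. fst p \<times> snd p) ` P)"
proof (rule ccontr)
  define R where "R = (\<lambda>p::'a set \<times> 'a set. fst p \<times> snd p)"
  assume nt: "\<not> ?thesis"
  then have bad: "\<exists>p\<in>P. \<not> R p \<subseteq> \<Union>(R ` F)" if "F \<subseteq> P" "finite F" for F
  proof -
    have nt': "\<not> (\<exists>P0\<subseteq>P. finite P0 \<and> \<Union>(R ` P0) = \<Union>(R ` P))" using nt unfolding R_def .
    have "\<Union>(R ` F) \<noteq> \<Union>(R ` P)"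
    proof
      assume "\<Union>(R ` F) = \<Union>(R ` P)"
      then show False using nt' that by blast
    qed
    moreover have "\<Union>(R ` F) \<subseteq> \<Union>(R ` P)" using that by blast
    ultimately show ?thesis by blast
  qed
  define sel where "sel = (\<lambda>F. SOME p. p \<in> P \<and> \<not> R p \<subseteq> \<Union>(R ` F))"
  define g where "g = rec_nat {} (\<lambda>n G. insert (sel G) G)"
  have g0: "g 0 = {}" and gS: "\<And>n. g (Suc n) = insert (sel (g n)) (g n)" unfolding g_def by simp_all
  have gP: "g n \<subseteq> P \<and> finite (g n)" for n
  proof (induction n)
    case 0 then show ?case by (simp add: g0)
  next
    case (Suc n)
    then have "\<exists>p. p \<in> P \<and> \<not> R p \<subseteq> \<Union>(R ` g n)" using bad by blast
    then have "sel (g n) \<in> P" unfolding sel_def by (rule someI2_ex) blast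
    then show ?case using Suc by (simp add: gS)
  qed
  define p where "p = (\<lambda>n. sel (g n))"
  have pP: "p n \<in> P \<and> \<not> R (p n) \<subseteq> \<Union>(R ` g n)" for n
  proof -
    have "\<exists>p\<in>P. \<not> R p \<subseteq> \<Union>(R ` g n)" using bad[OF conjunct1[OF gP] conjunct2[OF gP]] .
    then have "\<exists>p. p \<in> P \<and> \<not> R p \<subseteq> \<Union>(R ` g n)" by (simp only: Bex_def)
    then show ?thesis unfolding p_def sel_def by (rule someI_ex)
  qed
  have pg: "k < n \<Longrightarrow> p k \<in> g n" for k n
  proof (induction n)
    case 0 then show ?case by simp
  next
    case (Suc n) then show ?case by (auto simp: gS p_def less_Suc_eq)
  qed
  define z where "z = (\<lambda>n. SOME q. q \<in> R (p n) \<and> q \<notin> \<Union>(R ` g n))"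
  have zR: "z n \<in> R (p n) \<and> z n \<notin> \<Union>(R ` g n)" for n
  proof -
    have "\<exists>q. q \<in> R (p n) \<and> q \<notin> \<Union>(R ` g n)" using pP[of n] by blast
    then show ?thesis unfolding z_def by (rule someI_ex)
  qed
  have zk: "k < n \<Longrightarrow> fst (z n) \<notin> fst (p k) \<or> snd (z n) \<notin> snd (p k)" for k n
  proof -
    assume "k < n"
    then have "z n \<notin> R (p k)" using zR[of n] pg[of k n] by blast
    then show ?thesis unfolding R_def by (cases "z n") auto
  qed
  define f where "f = (\<lambda>X::nat set. if fst (z (Max X)) \<notin> fst (p (Min X)) then 0::nat else 1)"
  have "\<exists>Y t. Y \<subseteq> UNIV \<and> infinite Y \<and> t < 2 \<and> (\<forall>x\<in>Y. \<forall>y\<in>Y. x\<noteq>y \<longrightarrow> f {x, y} = t)"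
    by (rule Ramsey2) (auto simp: f_def)
  then obtain Y t where Y: "infinite Y" "t < 2" and hom: "\<And>x y. x \<in> Y \<Longrightarrow> y \<in> Y \<Longrightarrow> x \<noteq> y \<Longrightarrow> f {x, y} = t"
    by blast
  have key: "k \<in> Y \<Longrightarrow> n \<in> Y \<Longrightarrow> k < n \<Longrightarrow> (if t = 0 then fst (z n) \<notin> fst (p k) else snd (z n) \<notin> snd (p k))" for k n
  proof -
    assume a: "k \<in> Y" "n \<in> Y" "k < n"
    have "Max {k, n} = n" "Min {k, n} = k" using a by auto
    then have "f {k, n} = (if fst (z n) \<notin> fst (p k) then 0 else 1)" by (simp add: f_def)
    then show ?thesis using hom[OF a(1,2)] a(3) zk[OF a(3)] Y(2) by (auto split: if_splits)
  qed
  define c where "c = (if t = 0 then fst else (snd :: 'a set \<times> 'a set \<Rightarrow> 'a set))"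
  define d where "d = (if t = 0 then fst else (snd :: 'a \<times> 'a \<Rightarrow> 'a))"
  have cop: "openin \<tau> (c (p n))" for n using pP[of n] PS unfolding c_def by auto
  have ck: "k \<in> Y \<Longrightarrow> n \<in> Y \<Longrightarrow> k < n \<Longrightarrow> d (z n) \<notin> c (p k)" for k n
    using key[of k n] unfolding c_def d_def by auto
  have cz: "d (z n) \<in> c (p n)" for n using zR[of n] unfolding R_def c_def d_def by (auto simp: mem_Times_iff)
  obtain F0 where F0: "F0 \<subseteq> (\<lambda>n. c (p n)) ` Y" "finite F0" "\<Union>F0 = \<Union>((\<lambda>n. c (p n)) ` Y)"
  proof -
    have "(\<lambda>n. c (p n)) ` Y \<subseteq> {U. openin \<tau> U}" using cop by auto
    from N[unfolded acc_fam_def, rule_format, OF this] obtain F0 where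
      "F0 \<subseteq> (\<lambda>n. c (p n)) ` Y" "finite F0" "\<Union>F0 = \<Union>((\<lambda>n. c (p n)) ` Y)" by blast
    then show ?thesis by (rule that)
  qed
  then obtain Y0 where Y0: "Y0 \<subseteq> Y" "finite Y0" "F0 = (\<lambda>n. c (p n)) ` Y0"
    by (meson finite_subset_image)
  obtain n where n: "n \<in> Y" "\<forall>k\<in>Y0. k < n"
  proof -
    obtain n where n1: "n \<in> Y" and n2: "n > Max (insert 0 Y0)"
      using Y(1) unfolding infinite_nat_iff_unbounded by blast
    have "k < n" if "k \<in> Y0" for k
    proof -
      have "k \<le> Max (insert 0 Y0)" using Y0(2) that by simp
      then show ?thesis using n2 by linarith
    qed
    then show ?thesis using n1 by (intro that) auto
  qed
  have "d (z n) \<in> \<Union>((\<lambda>n. c (p n)) ` Y)" using cz[of n] n(1) by blast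
  then have "d (z n) \<in> \<Union>F0" by (simp only: F0(3))
  then obtain k where k: "k \<in> Y0" "d (z n) \<in> c (p k)" unfolding Y0(3) by blast
  have "k \<in> Y" using k(1) Y0(1) by blast
  moreover have "k < n" using n(2) k(1) by blast
  ultimately have "d (z n) \<notin> c (p k)" using ck n(1) by blast
  then show False using k(2) by contradiction
qed


lemma gen_noeth:
  assumes A: "acc_fam B"
  shows "noetherian_top (gen_top B)"
  unfolding noetherian_top_def
proof (intro allI impI)
  fix K :: "'a set"
  define B' where "B' = insert UNIV B"
  have A': "acc_fam B'" unfolding B'_def using A by (rule acc_insert)
  define X where "X = topology (arbitrary union_of (finite intersection_of (\<lambda>x. x \<in> B') relative_to K))"
  have cX: "compact_space X"
  proof (rule Alexander_subbase_alt[of K B'])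
    have "UNIV \<in> B'" unfolding B'_def by (rule insertI1)
    then have "UNIV \<subseteq> \<Union>B'" by (rule Union_upper)
    then show "K \<subseteq> \<Union>B'" by (rule subset_trans[OF subset_UNIV])
    fix C assume C: "C \<subseteq> B'" "K \<subseteq> \<Union>C"
    from A'[unfolded acc_fam_def, rule_format, OF C(1)] obtain C' where
      C': "C' \<subseteq> C" "finite C'" "\<Union>C' = \<Union>C" by (elim exE conjE)
    have "K \<subseteq> \<Union>C'" using C(2) C'(3) by (simp only:)
    then show "\<exists>C'. finite C' \<and> C' \<subseteq> C \<and> K \<subseteq> \<Union>C'" using C'(1,2) by (intro exI[of _ C'] conjI)
  next
    show "topology (arbitrary union_of (finite intersection_of (\<lambda>x. x \<in> B') relative_to K)) = X"
      unfolding X_def ..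
  qed
  have tX: "topspace X = K" unfolding X_def by simp
  have oX: "openin X (Q \<inter> K)" if "generate_topology B Q" for Q
    using that
  proof (induction rule: generate_topology.induct)
    case UNIV then show ?case using tX by (metis inf_top_left openin_topspace)
  next
    case (Int a b)
    from Int.IH have "openin X ((a \<inter> K) \<inter> (b \<inter> K))" by (rule openin_Int)
    moreover have "(a \<inter> K) \<inter> (b \<inter> K) = a \<inter> b \<inter> K" by blast
    ultimately show ?case by simp
  next
    case (UN K')
    then have "openin X (\<Union>((\<lambda>k. k \<inter> K) ` K'))" by (intro openin_Union) auto
    moreover have "\<Union>((\<lambda>k. k \<inter> K) ` K') = \<Union>K' \<inter> K" by blast
    ultimately show ?case by simp
  next
    case (Basis s)
    have "(finite intersection_of (\<lambda>x. x \<in> B')) s" using Basis unfolding B'_def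
      by (intro finite_intersection_of_inc) auto
    then have "(finite intersection_of (\<lambda>x. x \<in> B') relative_to K) (s \<inter> K)"
      unfolding relative_to_def by (intro exI[of _ s]) auto
    then have "(arbitrary union_of (finite intersection_of (\<lambda>x. x \<in> B') relative_to K)) (s \<inter> K)"
      by (rule arbitrary_union_of_inc)
    then show ?case unfolding X_def openin_subbase .
  qed
  show "compactin (gen_top B) K"
    unfolding compactin_def
  proof (intro conjI allI impI)
    show "K \<subseteq> topspace (gen_top B)" by simp
    fix U assume U: "(\<forall>x\<in>U. openin (gen_top B) x) \<and> K \<subseteq> \<Union>U"
    have "compactin X K" using cX tX unfolding compact_space_def by simp
    moreover have "\<forall>x\<in>(\<lambda>u. u \<inter> K) ` U. openin X x" using U oX unfolding openin_gen_top by blast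
    moreover have "K \<subseteq> \<Union>((\<lambda>u. u \<inter> K) ` U)" using U by blast
    ultimately obtain F where F: "finite F" "F \<subseteq> (\<lambda>u. u \<inter> K) ` U" "K \<subseteq> \<Union>F"
      unfolding compactin_def by meson
    then obtain G where G: "G \<subseteq> U" "finite G" "F = (\<lambda>u. u \<inter> K) ` G" by (meson finite_subset_image)
    show "\<exists>F. finite F \<and> F \<subseteq> U \<and> K \<subseteq> \<Union>F"
      using F G by (intro exI[of _ G]) auto
  qed
qed

definition upcl :: "'a topology \<Rightarrow> 'a list set \<Rightarrow> bool" where
  "upcl \<theta> X \<longleftrightarrow> (\<forall>u w. u \<in> X \<longrightarrow> higman_le \<theta> u w \<longrightarrow> w \<in> X)"

lemma higman_trans: "higman_le \<theta> u v \<Longrightarrow> higman_le \<theta> v w \<Longrightarrow> higman_le \<theta> u w"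
  unfolding higman_le_def by (rule list_emb_trans) (auto simp: spec_le_def)

lemma upcl_up: "upcl \<theta> (up_higman \<theta> A)"
  unfolding upcl_def up_higman_def using higman_trans by blast

lemma gen_upcl: "generate_topology B Q \<Longrightarrow> (\<And>b. b \<in> B \<Longrightarrow> upcl \<theta> b) \<Longrightarrow> upcl \<theta> Q"
  by (induction rule: generate_topology.induct) (fastforce simp: upcl_def)+

lemma concat_restr:
  assumes H: "\<And>u w. w \<in> H \<Longrightarrow> higman_le \<theta> u w \<Longrightarrow> u \<in> H"
  shows "up_higman \<theta> (word_concat A B) \<inter> H = up_higman \<theta> (word_concat (A \<inter> H) (B \<inter> H)) \<inter> H"
proof
  show "up_higman \<theta> (word_concat (A \<inter> H) (B \<inter> H)) \<inter> H \<subseteq> up_higman \<theta> (word_concat A B) \<inter> H"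
    unfolding up_higman_def word_concat_def by blast
  show "up_higman \<theta> (word_concat A B) \<inter> H \<subseteq> up_higman \<theta> (word_concat (A \<inter> H) (B \<inter> H)) \<inter> H"
  proof
    fix w assume w: "w \<in> up_higman \<theta> (word_concat A B) \<inter> H"
    then obtain u v where uv: "u \<in> A" "v \<in> B" "higman_le \<theta> (u @ v) w"
      unfolding up_higman_def word_concat_def by blast
    then obtain us vs where "w = us @ vs" "list_emb (spec_le \<theta>) u us" "list_emb (spec_le \<theta>) v vs"
      unfolding higman_le_def using list_emb_appendD by blast
    then have "higman_le \<theta> u w" "higman_le \<theta> v w" unfolding higman_le_def by auto
    then have "u \<in> H" "v \<in> H" using H w by auto
    then show "w \<in> up_higman \<theta> (word_concat (A \<inter> H) (B \<inter> H)) \<inter> H"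
      using uv w unfolding up_higman_def word_concat_def by blast
  qed
qed

lemma restr_match:
  assumes "generate_topology B1 Q"
    and "\<And>b. b \<in> B1 \<Longrightarrow> \<exists>b'. generate_topology B2 b' \<and> b \<inter> H = b' \<inter> H"
  shows "\<exists>Q'. generate_topology B2 Q' \<and> Q \<inter> H = Q' \<inter> H"
  using assms(1)
proof (induction rule: generate_topology.induct)
  case UNIV then show ?case by (auto intro: generate_topology.UNIV)
next
  case (Int a b)
  then obtain a' b' where "generate_topology B2 a'" "a \<inter> H = a' \<inter> H" "generate_topology B2 b'" "b \<inter> H = b' \<inter> H"
    by blast
  then show ?case by (intro exI[of _ "a' \<inter> b'"]) (auto intro: generate_topology.Int)
next
  case (UN K)
  then have "\<forall>k\<in>K. \<exists>k'. generate_topology B2 k' \<and> k \<inter> H = k' \<inter> H" by blast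
  then obtain f where f: "\<And>k. k \<in> K \<Longrightarrow> generate_topology B2 (f k) \<and> k \<inter> H = f k \<inter> H" by metis
  have "generate_topology B2 (\<Union>(f ` K))" using f by (intro generate_topology.UN) auto
  moreover have "\<Union>K \<inter> H = \<Union>(f ` K) \<inter> H" using f by blast
  ultimately show ?case by blast
next
  case (Basis s) then show ?case using assms(2) by blast
qed

lemma restr_open:
  assumes "topspace \<tau> = UNIV" "openin (top_restrict \<tau> H) A"
  shows "\<exists>U. openin \<tau> U \<and> A \<inter> H = U \<inter> H"
proof -
  have "generate_topology {U \<inter> H | U. openin \<tau> U} A"
    using assms(2) unfolding top_restrict_def openin_gen_top .
  then show ?thesis
  proof (induction rule: generate_topology.induct)
    case UNIV then show ?case using assms(1) by (metis openin_topspace)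
  next
    case (Int a b) then show ?case by (metis inf_assoc inf_commute openin_Int inf_left_commute)
  next
    case (UN K)
    then have "\<forall>k\<in>K. \<exists>U. openin \<tau> U \<and> k \<inter> H = U \<inter> H" by blast
    then obtain f where f: "\<And>k. k \<in> K \<Longrightarrow> openin \<tau> (f k) \<and> k \<inter> H = f k \<inter> H" by metis
    have "openin \<tau> (\<Union>(f ` K))" using f by (intro openin_Union) auto
    moreover have "\<Union>K \<inter> H = \<Union>(f ` K) \<inter> H" using f by blast
    ultimately show ?case by blast
  next
    case (Basis s) then show ?case by auto
  qed
qed

theorem mainTheorem12:
  fixes \<theta> :: "'a topology"
  assumes "topspace \<theta> = UNIV"
    and "noetherian_top \<theta>"
  shows "topology_expander (S_map \<theta>)"
proof -
  define gens where "gens = (\<lambda>\<tau>::'a list topology. {up_higman \<theta> (word_concat U V) | U V. openin \<tau> U \<and> openin \<tau> V}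
      \<union> {up_higman \<theta> ((\<lambda>a. [a]) ` W) | W. openin \<theta> W})"
  have Sdef: "S_map \<theta> \<tau> = gen_top (gens \<tau>)" for \<tau> unfolding S_map_def gens_def ..
  have gup: "upcl \<theta> b" if "b \<in> gens \<tau>" for b \<tau>
    using that unfolding gens_def using upcl_up by blast
  have top: "topspace (S_map \<theta> \<tau>) = UNIV" for \<tau> by (simp add: Sdef)
  have mono: "top_le (S_map \<theta> \<tau>) (S_map \<theta> \<sigma>)" if "top_le \<tau> \<sigma>" for \<tau> \<sigma>
  proof -
    have "gens \<tau> \<subseteq> gens \<sigma>" using that unfolding gens_def top_le_def by blast
    then show ?thesis unfolding top_le_def Sdef openin_gen_top using gen_mono by blast
  qed
  have accT: "acc_fam {W. openin \<theta> W}" using assms by (rule noeth_acc)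
  have noeth: "noetherian_top (S_map \<theta> \<tau>)" if tt: "topspace \<tau> = UNIV" and nt: "noetherian_top \<tau>" for \<tau>
  proof -
    define k1 where "k1 = (\<lambda>R. up_higman \<theta> ((\<lambda>(u,v). u @ v) ` R))"
    define r1 where "r1 = (\<lambda>p::'a list set \<times> 'a list set. fst p \<times> snd p)"
    define S1 where "S1 = {p::'a list set \<times> 'a list set. openin \<tau> (fst p) \<and> openin \<tau> (snd p)}"
    define k2 where "k2 = (\<lambda>W. up_higman \<theta> ((\<lambda>a. [a]) ` W))"
    have wc: "word_concat U V = (\<lambda>(u,v). u @ v) ` (U \<times> V)" for U V :: "'a list set"
      unfolding word_concat_def by auto
    have kr: "k1 (r1 p) = up_higman \<theta> (word_concat (fst p) (snd p))" for p
      unfolding k1_def r1_def wc by simp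
    have e1: "{up_higman \<theta> (word_concat U V) | U V. openin \<tau> U \<and> openin \<tau> V} = (\<lambda>x. k1 (r1 x)) ` S1"
    proof (intro equalityI subsetI)
      fix x assume "x \<in> {up_higman \<theta> (word_concat U V) | U V. openin \<tau> U \<and> openin \<tau> V}"
      then obtain U V where x: "x = up_higman \<theta> (word_concat U V)" "openin \<tau> U" "openin \<tau> V" by blast
      then have "(U, V) \<in> S1" "x = k1 (r1 (U, V))" unfolding S1_def kr by simp_all
      then show "x \<in> (\<lambda>x. k1 (r1 x)) ` S1" by (rule rev_image_eqI)
    next
      fix x assume "x \<in> (\<lambda>x. k1 (r1 x)) ` S1"
      then obtain p where p: "p \<in> S1" "x = k1 (r1 p)" by (rule imageE) simp
      then show "x \<in> {up_higman \<theta> (word_concat U V) | U V. openin \<tau> U \<and> openin \<tau> V}"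
        unfolding kr S1_def by blast
    qed
    have e2: "{up_higman \<theta> ((\<lambda>a. [a]) ` W) | W. openin \<theta> W} = (\<lambda>x. k2 (id x)) ` {W. openin \<theta> W}"
      unfolding k2_def by auto
    have a1: "acc_fam ((\<lambda>x. k1 (r1 x)) ` S1)"
    proof (rule acc_image[where r=r1 and k=k1 and S=S1])
      have N: "acc_fam {U. openin \<tau> U}" using tt nt by (rule noeth_acc)
      show "\<forall>F\<subseteq>S1. \<exists>F0\<subseteq>F. finite F0 \<and> \<Union> (r1 ` F0) = \<Union> (r1 ` F)"
      proof (intro allI impI)
        fix F assume "F \<subseteq> S1"
        then have "F \<subseteq> {p. openin \<tau> (fst p) \<and> openin \<tau> (snd p)}" unfolding S1_def .
        from rect_acc[OF N this] show "\<exists>F0\<subseteq>F. finite F0 \<and> \<Union> (r1 ` F0) = \<Union> (r1 ` F)"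
          unfolding r1_def .
      qed
      show "k1 (\<Union> X) = \<Union> (k1 ` X)" for X unfolding k1_def up_higman_def by blast
    qed
    have a2: "acc_fam ((\<lambda>x. k2 (id x)) ` {W. openin \<theta> W})"
    proof (rule acc_image[where r=id and k=k2 and S="{W. openin \<theta> W}"])
      show "\<forall>F\<subseteq>{W. openin \<theta> W}. \<exists>F0\<subseteq>F. finite F0 \<and> \<Union> (id ` F0) = \<Union> (id ` F)"
        using accT unfolding acc_fam_def by simp
      show "k2 (\<Union> X) = \<Union> (k2 ` X)" for X unfolding k2_def up_higman_def by blast
    qed
    have "acc_fam (gens \<tau>)" unfolding gens_def e1 e2 using a1 a2 by (rule acc_Un)
    then show ?thesis unfolding Sdef by (rule gen_noeth)
  qed
  have tr: "top_restrict X H = gen_top {U \<inter> H | U. openin X U}" for X :: "'a list topology" and H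
    by (simp add: top_restrict_def)
  have exp: "top_restrict (S_map \<theta> \<tau>) H = top_restrict (S_map \<theta> (top_restrict \<tau> H)) H"
    if tt: "topspace \<tau> = UNIV" and le: "top_le \<tau> (S_map \<theta> \<tau>)" and cl: "closedin \<tau> H" for \<tau> H
  proof -
    define \<tau>H where "\<tau>H = top_restrict \<tau> H"
    have "openin \<tau> (UNIV - H)" using cl tt unfolding closedin_def by simp
    then have "openin (S_map \<theta> \<tau>) (UNIV - H)" using le unfolding top_le_def by blast
    then have "generate_topology (gens \<tau>) (UNIV - H)" unfolding Sdef openin_gen_top .
    then have "upcl \<theta> (UNIV - H)" using gup by (rule gen_upcl)
    then have down: "u \<in> H" if "w \<in> H" "higman_le \<theta> u w" for u w
      using that unfolding upcl_def by blast
    have ttH: "topspace \<tau>H = UNIV" unfolding \<tau>H_def top_restrict_def by simp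
    have oH: "openin \<tau>H (U \<inter> H)" if "openin \<tau> U" for U
      unfolding \<tau>H_def top_restrict_def openin_gen_top using that
      by (intro generate_topology.Basis) blast
    have d1: "\<exists>b'. generate_topology (gens \<tau>H) b' \<and> b \<inter> H = b' \<inter> H" if bmem: "b \<in> gens \<tau>" for b
    proof -
      consider (c) U V where "b = up_higman \<theta> (word_concat U V)" "openin \<tau> U" "openin \<tau> V"
        | (l) W where "b = up_higman \<theta> ((\<lambda>a. [a]) ` W)" "openin \<theta> W"
        using bmem unfolding gens_def by blast
      then show ?thesis
      proof cases
        case c
        have "up_higman \<theta> (word_concat (U \<inter> H) (V \<inter> H)) \<in> gens \<tau>H"
          unfolding gens_def using oH c by blast
        moreover have "b \<inter> H = up_higman \<theta> (word_concat (U \<inter> H) (V \<inter> H)) \<inter> H"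
          unfolding c(1) using down by (rule concat_restr)
        ultimately show ?thesis by (blast intro: generate_topology.Basis)
      next
        case l
        then have "b \<in> gens \<tau>H" unfolding gens_def by blast
        then show ?thesis by (blast intro: generate_topology.Basis)
      qed
    qed
    have d2: "\<exists>b'. generate_topology (gens \<tau>) b' \<and> b \<inter> H = b' \<inter> H" if bmem: "b \<in> gens \<tau>H" for b
    proof -
      consider (c) A B where "b = up_higman \<theta> (word_concat A B)" "openin \<tau>H A" "openin \<tau>H B"
        | (l) W where "b = up_higman \<theta> ((\<lambda>a. [a]) ` W)" "openin \<theta> W"
        using bmem unfolding gens_def by blast
      then show ?thesis
      proof cases
        case c
        obtain U where U: "openin \<tau> U" "A \<inter> H = U \<inter> H" using restr_open[OF tt] c(2) unfolding \<tau>H_def by blast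
        obtain V where V: "openin \<tau> V" "B \<inter> H = V \<inter> H" using restr_open[OF tt] c(3) unfolding \<tau>H_def by blast
        have "up_higman \<theta> (word_concat U V) \<in> gens \<tau>"
          unfolding gens_def using U V by blast
        moreover have "b \<inter> H = up_higman \<theta> (word_concat U V) \<inter> H"
        proof -
          have "b \<inter> H = up_higman \<theta> (word_concat (A \<inter> H) (B \<inter> H)) \<inter> H"
            unfolding c(1) using down by (rule concat_restr)
          also have "\<dots> = up_higman \<theta> (word_concat (U \<inter> H) (V \<inter> H)) \<inter> H" using U V by simp
          also have "\<dots> = up_higman \<theta> (word_concat U V) \<inter> H"
            using down by (rule concat_restr[symmetric])
          finally show ?thesis .
        qed
        ultimately show ?thesis by (blast intro: generate_topology.Basis)
      next
        case l
        then have "b \<in> gens \<tau>" unfolding gens_def by blast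
        then show ?thesis by (blast intro: generate_topology.Basis)
      qed
    qed
    have "{U \<inter> H | U. openin (S_map \<theta> \<tau>) U} = {U \<inter> H | U. openin (S_map \<theta> \<tau>H) U}"
    proof (intro equalityI subsetI)
      fix x assume "x \<in> {U \<inter> H | U. openin (S_map \<theta> \<tau>) U}"
      then obtain U where "x = U \<inter> H" "generate_topology (gens \<tau>) U" unfolding Sdef openin_gen_top by blast
      moreover obtain U' where "generate_topology (gens \<tau>H) U'" "U \<inter> H = U' \<inter> H"
        using restr_match[OF \<open>generate_topology (gens \<tau>) U\<close> d1] by blast
      ultimately show "x \<in> {U \<inter> H | U. openin (S_map \<theta> \<tau>H) U}" unfolding Sdef openin_gen_top by blast
    next
      fix x assume "x \<in> {U \<inter> H | U. openin (S_map \<theta> \<tau>H) U}"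
      then obtain U where "x = U \<inter> H" "generate_topology (gens \<tau>H) U" unfolding Sdef openin_gen_top by blast
      moreover obtain U' where "generate_topology (gens \<tau>) U'" "U \<inter> H = U' \<inter> H"
        using restr_match[OF \<open>generate_topology (gens \<tau>H) U\<close> d2] by blast
      ultimately show "x \<in> {U \<inter> H | U. openin (S_map \<theta> \<tau>) U}" unfolding Sdef openin_gen_top by blast
    qed
    then show ?thesis unfolding tr[of "S_map \<theta> \<tau>"] tr[of "S_map \<theta> (top_restrict \<tau> H)"] \<tau>H_def by simp
  qed
  show ?thesis
    unfolding topology_expander_def refinement_function_def
    using top mono noeth exp by blast
qed

end
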